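(* Let $G=(V,E)$ be a finite undirected graph and $k$ a positive integer. Then \[ \mathcal{F}(G,k)\;\cong\; G^{\square k}/\pi, \] where $\pi$ is the equitable partition of $G^{\square k}$ whose cells are the orbits $\mathcal{O}_x=\{y\in V^k:\exists\sigma\in S_k,\ \sigma(x)=y\}$ of the symmetric group $S_k$ acting on $V^k$ by $\sigma(x_1,\dots,x_k)=(x_{\sigma(1)},\dots,x_{\sigma(k)})$. Moreover, if $G$ has perfect state transfer, then so does $\mathcal{F}(G,k)$, for every positive integer $k$.
   Context: Feder's secondary graph $\mathcal{F}(G,k)$ is the weighted graph whose vertices are the vectors $(n_u)_{u\in V}$ of nonnegative integers with $\sum_{u\in V}n_u=k$ (occupation numbers of $k$ bosons), where, for each edge $\{u,v\}$ of $G$ and each such vector $n$ with $n_u\ge1$, the vertex $n$ is joined to the vertex $n'$ obtained from $n$ by decreasing $n_u$ by one and increasing $n_v$ by one, with edge weight $\sqrt{n_u(n_v+1)}$. $G^{\square k}$ is the $k$-fold Cartesian product of $G$ (vertex set $V^k$, two $k$-tuples adjacent iff they differ in exactly one coordinate, in which the entries are adjacent in $G$). For an equitable partition $\pi=V_1\uplus\cdots\uplus V_m$ (each vertex of $V_j$ has exactly $d_{j,k}$ neighbours in $V_k$), the quotient $G/\pi$ is the weighted graph on the cells with adjacency matrix entries $\sqrt{d_{j,k}d_{k,j}}$. A weighted graph with adjacency matrix $A$ has perfect state transfer if there are vertices $u,v$ and a time $t$ with $|\langle v|e^{-itA}|u\rangle|=1$. *)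

theory Defs
  imports "HOL-Analysis.Analysis" "HOL-Combinatorics.Permutations"
begin

definition simple_graph :: "'a set \<Rightarrow> ('a \<Rightarrow> 'a \<Rightarrow> bool) \<Rightarrow> bool" where
  "simple_graph V E \<longleftrightarrow> finite V \<and> (\<forall>u v. E u v \<longrightarrow> u \<in> V \<and> v \<in> V)
     \<and> (\<forall>u v. E u v \<longrightarrow> E v u) \<and> (\<forall>u. \<not> E u u)"

definition graph_adj :: "('a \<Rightarrow> 'a \<Rightarrow> bool) \<Rightarrow> 'a \<Rightarrow> 'a \<Rightarrow> real" where
  "graph_adj E u v = (if E u v then 1 else 0)"

definition wiso :: "'b set \<Rightarrow> ('b \<Rightarrow> 'b \<Rightarrow> real) \<Rightarrow> 'c set \<Rightarrow> ('c \<Rightarrow> 'c \<Rightarrow> real) \<Rightarrow> bool" where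
  "wiso W1 A1 W2 A2 \<longleftrightarrow> (\<exists>f. bij_betw f W1 W2 \<and> (\<forall>x\<in>W1. \<forall>y\<in>W1. A2 (f x) (f y) = A1 x y))"

fun mpow :: "'b set \<Rightarrow> ('b \<Rightarrow> 'b \<Rightarrow> real) \<Rightarrow> nat \<Rightarrow> 'b \<Rightarrow> 'b \<Rightarrow> real" where
  "mpow W A 0 v u = (if v = u then 1 else 0)"
| "mpow W A (Suc n) v u = (\<Sum>x\<in>W. A v x * mpow W A n x u)"

text \<open>The entry  <v| exp(-itA) |u>  given by the exponential series.\<close>
definition transition :: "'b set \<Rightarrow> ('b \<Rightarrow> 'b \<Rightarrow> real) \<Rightarrow> real \<Rightarrow> 'b \<Rightarrow> 'b \<Rightarrow> complex" where
  "transition W A t v u =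
     (\<Sum>n. (- \<i> * complex_of_real t) ^ n / of_nat (fact n) * complex_of_real (mpow W A n v u))"

definition pst :: "'b set \<Rightarrow> ('b \<Rightarrow> 'b \<Rightarrow> real) \<Rightarrow> bool" where
  "pst W A \<longleftrightarrow> (\<exists>u\<in>W. \<exists>v\<in>W. u \<noteq> v \<and> (\<exists>t::real. cmod (transition W A t v u) = 1))"

text \<open>Feder's secondary graph F(G,k): occupation-number vectors supported on V summing to k.\<close>
definition feder_verts :: "'a set \<Rightarrow> nat \<Rightarrow> ('a \<Rightarrow> nat) set" where
  "feder_verts V k = {n. (\<forall>x. x \<notin> V \<longrightarrow> n x = 0) \<and> (\<Sum>x\<in>V. n x) = k}"

definition feder_adj :: "'a set \<Rightarrow> ('a \<Rightarrow> 'a \<Rightarrow> bool) \<Rightarrow> ('a \<Rightarrow> nat) \<Rightarrow> ('a \<Rightarrow> nat) \<Rightarrow> real" where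
  "feder_adj V E n n' =
     (\<Sum>(u,v)\<in>{(u,v). u \<in> V \<and> v \<in> V \<and> E u v \<and> 1 \<le> n u \<and> n' = n(u := n u - 1, v := n v + 1)}.
        sqrt (real (n u * (n v + 1))))"

definition cart_pow_verts :: "'a set \<Rightarrow> nat \<Rightarrow> 'a list set" where
  "cart_pow_verts V k = {xs. set xs \<subseteq> V \<and> length xs = k}"

definition cart_pow_adj :: "('a \<Rightarrow> 'a \<Rightarrow> bool) \<Rightarrow> nat \<Rightarrow> 'a list \<Rightarrow> 'a list \<Rightarrow> bool" where
  "cart_pow_adj E k xs ys \<longleftrightarrow> length xs = k \<and> length ys = k \<and>
     (\<exists>i<k. E (xs ! i) (ys ! i) \<and> (\<forall>j<k. j \<noteq> i \<longrightarrow> xs ! j = ys ! j))"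

definition sym_orbit :: "'a set \<Rightarrow> nat \<Rightarrow> 'a list \<Rightarrow> 'a list set" where
  "sym_orbit V k x = {y \<in> cart_pow_verts V k.
       \<exists>\<sigma>. \<sigma> permutes {..<k} \<and> y = map (\<lambda>i. x ! \<sigma> i) [0..<k]}"

definition orbit_partition :: "'a set \<Rightarrow> nat \<Rightarrow> 'a list set set" where
  "orbit_partition V k = sym_orbit V k ` cart_pow_verts V k"

definition nbr_count :: "('b \<Rightarrow> 'b \<Rightarrow> bool) \<Rightarrow> 'b \<Rightarrow> 'b set \<Rightarrow> nat" where
  "nbr_count adj x D = card {y \<in> D. adj x y}"

definition equitable :: "'b set \<Rightarrow> ('b \<Rightarrow> 'b \<Rightarrow> bool) \<Rightarrow> 'b set set \<Rightarrow> bool" where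
  "equitable X adj P \<longleftrightarrow>
     \<Union>P = X \<and> (\<forall>C\<in>P. C \<noteq> {}) \<and> (\<forall>C\<in>P. \<forall>D\<in>P. C \<noteq> D \<longrightarrow> C \<inter> D = {}) \<and>
     (\<forall>C\<in>P. \<forall>D\<in>P. \<forall>x\<in>C. \<forall>x'\<in>C. nbr_count adj x D = nbr_count adj x' D)"

definition quot_adj :: "('b \<Rightarrow> 'b \<Rightarrow> bool) \<Rightarrow> 'b set \<Rightarrow> 'b set \<Rightarrow> real" where
  "quot_adj adj C D =
     sqrt (real (nbr_count adj (SOME x. x \<in> C) D * nbr_count adj (SOME y. y \<in> D) C))"

end

theory Submission
  imports Defs
begin


definition cnt :: "'a list \<Rightarrow> 'a \<Rightarrow> nat" where "cnt xs = (\<lambda>a. count (mset xs) a)"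
definition cls :: "'a set \<Rightarrow> nat \<Rightarrow> ('a \<Rightarrow> nat) \<Rightarrow> 'a list set" where
  "cls V k n = {y \<in> cart_pow_verts V k. cnt y = n}"

lemma orbit_eq:
  assumes "x \<in> cart_pow_verts V k"
  shows "sym_orbit V k x = cls V k (cnt x)"
proof
  have lx: "length x = k" using assms by (simp add: cart_pow_verts_def)
  show "sym_orbit V k x \<subseteq> cls V k (cnt x)"
  proof
    fix y assume "y \<in> sym_orbit V k x"
    then obtain \<sigma> where y: "y \<in> cart_pow_verts V k" "\<sigma> permutes {..<k}" "y = map (\<lambda>i. x ! \<sigma> i) [0..<k]"
      by (auto simp: sym_orbit_def)
    then have "y = permute_list \<sigma> x" using lx by (simp add: permute_list_def)
    then have "mset y = mset x" using y lx by simp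
    then show "y \<in> cls V k (cnt x)" using y by (simp add: cls_def cnt_def)
  qed
  show "cls V k (cnt x) \<subseteq> sym_orbit V k x"
  proof
    fix y assume y: "y \<in> cls V k (cnt x)"
    then have "mset y = mset x" by (auto simp: cls_def cnt_def fun_eq_iff intro: multiset_eqI)
    then obtain p where p: "p permutes {..<length x}" "permute_list p x = y"
      using mset_eq_permutation by metis
    then show "y \<in> sym_orbit V k x" using y lx by (auto simp: sym_orbit_def cls_def permute_list_def)
  qed
qed

lemma cnt_range:
  assumes "finite V" "x \<in> cart_pow_verts V k"
  shows "cnt x \<in> feder_verts V k"
proof -
  have "set x \<subseteq> V" "length x = k" using assms by (auto simp: cart_pow_verts_def)
  then show ?thesis using assms(1)
    by (auto simp: feder_verts_def cnt_def count_mset sum_count_set in_multiset_in_set count_list_0_iff)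
qed

lemma cnt_surj:
  assumes "finite V" "n \<in> feder_verts V k"
  shows "\<exists>x \<in> cart_pow_verts V k. cnt x = n"
proof -
  define M where "M = (\<Sum>a\<in>V. replicate_mset (n a) a)"
  have cM: "count M b = n b" for b
    using assms by (auto simp: M_def count_sum feder_verts_def sum.delta' split: if_splits)
  obtain xs where xs: "mset xs = M" using ex_mset by blast
  have "length xs = k" using assms xs by (simp add: M_def feder_verts_def flip: size_mset)
  moreover have "set xs \<subseteq> V"
  proof
    fix b assume "b \<in> set xs"
    then have "count M b > 0" using xs by (metis count_greater_zero_iff set_mset_mset)
    then show "b \<in> V" using cM assms by (auto simp: feder_verts_def)
  qed
  ultimately show ?thesis using xs cM by (auto simp: cart_pow_verts_def cnt_def fun_eq_iff intro!: bexI[of _ xs])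
qed


definition SS :: "'a set \<Rightarrow> ('a \<Rightarrow> 'a \<Rightarrow> bool) \<Rightarrow> ('a \<Rightarrow> nat) \<Rightarrow> ('a \<Rightarrow> nat) \<Rightarrow> ('a \<times> 'a) set" where
  "SS V E n p = {(u,v). u \<in> V \<and> v \<in> V \<and> E u v \<and> 1 \<le> n u \<and> p = n(u := n u - 1, v := n v + 1)}"

lemma feder_adj_SS: "feder_adj V E n p = (\<Sum>(u,v)\<in>SS V E n p. sqrt (real (n u * (n v + 1))))"
  by (simp add: feder_adj_def SS_def)

lemma SS_uniq:
  assumes "simple_graph V E" "(u,v) \<in> SS V E n p" "(a,b) \<in> SS V E n p"
  shows "a = u \<and> b = v"
proof -
  have uv: "u \<noteq> v" "a \<noteq> b" using assms by (auto simp: simple_graph_def SS_def)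
  have eq: "n(a := n a - 1, b := n b + 1) = n(u := n u - 1, v := n v + 1)"
    and ge: "1 \<le> n u" "1 \<le> n a" using assms by (auto simp: SS_def)
  have "b = v"
  proof (rule ccontr)
    assume "b \<noteq> v"
    have "n b + 1 = (if b = u then n u - 1 else n b)" using fun_cong[OF eq, of b] \<open>b \<noteq> v\<close> by simp
    then have "n b + 1 = (if b = u then n u - 1 else n b)" using \<open>b \<noteq> v\<close> by simp
    then show False by (cases "b = u") simp_all
  qed
  moreover have "a = u"
  proof (rule ccontr)
    assume "a \<noteq> u"
    have "n a - 1 = n a" using fun_cong[OF eq, of a] using \<open>a \<noteq> u\<close> uv \<open>b = v\<close> by simp
    then show False using ge(2) by simp
  qed
  ultimately show ?thesis by simp
qed

lemma SS_cases:
  assumes "simple_graph V E"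
  shows "SS V E n p = {} \<or> (\<exists>u v. SS V E n p = {(u,v)})"
proof (cases "SS V E n p = {}")
  case False
  then obtain u v where uv: "(u,v) \<in> SS V E n p" by auto
  have "SS V E n p \<subseteq> {(u,v)}"
  proof
    fix ab assume ab: "ab \<in> SS V E n p"
    obtain a b where "ab = (a,b)" by fastforce
    then show "ab \<in> {(u,v)}" using SS_uniq[OF assms uv, of a b] ab by simp
  qed
  then have "SS V E n p = {(u,v)}" using uv by blast
  then show ?thesis by blast
qed simp

lemma SS_swap:
  assumes "simple_graph V E" "(u,v) \<in> SS V E n p"
  shows "(v,u) \<in> SS V E p n \<and> p v = n v + 1"
proof -
  have uv: "u \<noteq> v" "E v u" using assms by (auto simp: simple_graph_def SS_def)
  have p: "p = n(u := n u - 1, v := n v + 1)" and ge: "1 \<le> n u" using assms by (auto simp: SS_def)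
  have "n = p(v := p v - 1, u := p u + 1)"
  proof
    fix w show "n w = (p(v := p v - 1, u := p u + 1)) w"
      using p ge uv by (cases "w = u"; cases "w = v") simp_all
  qed
  moreover have "v \<in> V" "u \<in> V" using assms by (auto simp: SS_def)
  moreover have "1 \<le> p v" "p v = n v + 1" using p uv by simp_all
  ultimately show ?thesis using uv unfolding SS_def by blast
qed

lemma cart_adj_iff:
  assumes "length x = k" "length y = k"
  shows "cart_pow_adj E k x y \<longleftrightarrow> (\<exists>i<k. E (x!i) (y!i) \<and> y = x[i := y!i])"
proof
  assume "cart_pow_adj E k x y"
  then obtain i where i: "i < k" "E (x!i) (y!i)" "\<forall>j<k. j \<noteq> i \<longrightarrow> x ! j = y ! j"
    by (auto simp: cart_pow_adj_def)
  have "y = x[i := y!i]" using i assms by (intro nth_equalityI) (auto simp: nth_list_update)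
  then show "\<exists>i<k. E (x!i) (y!i) \<and> y = x[i := y!i]" using i by blast
next
  assume "\<exists>i<k. E (x!i) (y!i) \<and> y = x[i := y!i]"
  then obtain i where i: "i < k" "E (x!i) (y!i)" "y = x[i := y!i]" by blast
  have "\<forall>j<k. j \<noteq> i \<longrightarrow> x ! j = y ! j"
    using i assms by (metis nth_list_update_neq)
  then show "cart_pow_adj E k x y" using i assms by (auto simp: cart_pow_adj_def)
qed

lemma cnt_update:
  assumes "i < length x" "x ! i \<noteq> v"
  shows "cnt (x[i := v]) = (cnt x)(x!i := cnt x (x!i) - 1, v := cnt x v + 1)"
  using assms by (auto simp: cnt_def mset_update fun_eq_iff)

lemma cnt_pos: "i < length x \<Longrightarrow> 1 \<le> cnt x (x!i)"
  by (simp add: cnt_def Suc_le_eq)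

lemma count_list_filter: "count_list xs u = length (filter ((=) u) xs)"
  by (induct xs) auto

lemma nbr_set:
  assumes "simple_graph V E" "x \<in> cart_pow_verts V k" "(u,v) \<in> SS V E (cnt x) p"
  shows "{y \<in> cls V k p. cart_pow_adj E k x y} = (\<lambda>i. x[i := v]) ` {i. i < k \<and> x ! i = u}"
proof -
  have lx: "length x = k" "set x \<subseteq> V" using assms by (auto simp: cart_pow_verts_def)
  have irr: "\<And>a. \<not> E a a" using assms(1) by (auto simp: simple_graph_def)
  have uv: "u \<in> V" "v \<in> V" "E u v" "u \<noteq> v" using assms irr by (auto simp: SS_def)
  show ?thesis
  proof
    show "{y \<in> cls V k p. cart_pow_adj E k x y} \<subseteq> (\<lambda>i. x[i := v]) ` {i. i < k \<and> x ! i = u}"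
    proof
      fix y assume y: "y \<in> {y \<in> cls V k p. cart_pow_adj E k x y}"
      then have ly: "length y = k" and cy: "cnt y = p" by (auto simp: cls_def cart_pow_verts_def)
      with y lx obtain i where i: "i < k" "E (x!i) (y!i)" "y = x[i := y!i]"
        using cart_adj_iff by blast
      have ne: "x!i \<noteq> y!i" using i irr by metis
      have "(x!i, y!i) \<in> SS V E (cnt x) p"
        using i lx cnt_update[of i x "y!i"] ne cnt_pos[of i x] cy assms(1)
        unfolding SS_def simple_graph_def by (metis (mono_tags, lifting) case_prodI mem_Collect_eq)
      then have "x!i = u \<and> y!i = v" using SS_uniq[OF assms(1) assms(3)] by blast
      then show "y \<in> (\<lambda>i. x[i := v]) ` {i. i < k \<and> x ! i = u}" using i by auto
    qed
  next
    show "(\<lambda>i. x[i := v]) ` {i. i < k \<and> x ! i = u} \<subseteq> {y \<in> cls V k p. cart_pow_adj E k x y}"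
    proof
      fix y assume "y \<in> (\<lambda>i. x[i := v]) ` {i. i < k \<and> x ! i = u}"
      then obtain i where i: "i < k" "x ! i = u" "y = x[i := v]" by auto
      have "cnt y = p" using i lx cnt_update[of i x v] uv assms(3) by (auto simp: SS_def)
      moreover have "y \<in> cart_pow_verts V k" using i lx uv
        by (auto simp: cart_pow_verts_def dest: subsetD[OF set_update_subset_insert])
      moreover have "cart_pow_adj E k x y" using i lx uv by (subst cart_adj_iff) auto
      ultimately show "y \<in> {y \<in> cls V k p. cart_pow_adj E k x y}" by (simp add: cls_def)
    qed
  qed
qed

lemma nbr_card1:
  assumes "simple_graph V E" "x \<in> cart_pow_verts V k" "(u,v) \<in> SS V E (cnt x) p"
  shows "card {y \<in> cls V k p. cart_pow_adj E k x y} = cnt x u"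
proof -
  have lx: "length x = k" using assms by (auto simp: cart_pow_verts_def)
  have uv: "u \<noteq> v" using assms(1,3) by (auto simp: SS_def simple_graph_def)
  have inj: "inj_on (\<lambda>i. x[i := v]) {i. i < k \<and> x ! i = u}"
  proof (rule inj_onI)
    fix i j assume "i \<in> {i. i < k \<and> x ! i = u}" "j \<in> {i. i < k \<and> x ! i = u}" "x[i := v] = x[j := v]"
    then show "i = j" using lx uv by (metis (mono_tags, lifting) mem_Collect_eq nth_list_update_eq nth_list_update_neq)
  qed
  have "card {i. i < k \<and> x ! i = u} = cnt x u"
    using lx by (simp add: cnt_def count_mset count_list_filter length_filter_conv_card eq_commute)
  then show ?thesis using nbr_set[OF assms] card_image[OF inj] by simp
qed

lemma nbr_card0:
  assumes "simple_graph V E" "x \<in> cart_pow_verts V k" "SS V E (cnt x) p = {}"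
  shows "{y \<in> cls V k p. cart_pow_adj E k x y} = {}"
proof (rule ccontr)
  assume "{y \<in> cls V k p. cart_pow_adj E k x y} \<noteq> {}"
  then obtain y where y: "y \<in> cls V k p" "cart_pow_adj E k x y" by auto
  have lx: "length x = k" "set x \<subseteq> V" using assms by (auto simp: cart_pow_verts_def)
  have irr: "\<And>a. \<not> E a a" and ed: "\<And>a b. E a b \<Longrightarrow> a \<in> V \<and> b \<in> V" using assms(1) by (auto simp: simple_graph_def)
  from y have ly: "length y = k" and cy: "cnt y = p" by (auto simp: cls_def cart_pow_verts_def)
  with y lx obtain i where i: "i < k" "E (x!i) (y!i)" "y = x[i := y!i]"
    using cart_adj_iff by blast
  have ne: "x!i \<noteq> y!i" using i irr by metis
  have "(x!i, y!i) \<in> SS V E (cnt x) p"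
    using i lx cnt_update[of i x "y!i"] ne cnt_pos[of i x] cy ed
    unfolding SS_def by (metis (mono_tags, lifting) case_prodI mem_Collect_eq)
  then show False using assms(3) by simp
qed

definition nb :: "'a set \<Rightarrow> ('a \<Rightarrow> 'a \<Rightarrow> bool) \<Rightarrow> ('a \<Rightarrow> nat) \<Rightarrow> ('a \<Rightarrow> nat) \<Rightarrow> nat" where
  "nb V E n p = (\<Sum>(u,v)\<in>SS V E n p. n u)"

lemma nbr_card:
  assumes "simple_graph V E" "x \<in> cart_pow_verts V k"
  shows "card {y \<in> cls V k p. cart_pow_adj E k x y} = nb V E (cnt x) p"
proof (cases "SS V E (cnt x) p = {}")
  case True
  then show ?thesis using nbr_card0[OF assms True] by (metis card.empty nb_def sum.empty)
next
  case False
  then obtain u v where uv: "SS V E (cnt x) p = {(u,v)}" using SS_cases[OF assms(1)] by blast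
  then show ?thesis using nbr_card1[OF assms, of u v p] by (simp add: nb_def)
qed


lemma feder_eq_image:
  assumes "finite V"
  shows "feder_verts V k = cnt ` cart_pow_verts V k"
  using cnt_range[OF assms] cnt_surj[OF assms] by blast

lemma op_eq:
  assumes "finite V"
  shows "orbit_partition V k = cls V k ` feder_verts V k"
proof -
  have "orbit_partition V k = (\<lambda>x. cls V k (cnt x)) ` cart_pow_verts V k"
    unfolding orbit_partition_def using orbit_eq by (metis (no_types, lifting) image_cong)
  also have "\<dots> = cls V k ` (cnt ` cart_pow_verts V k)" by (simp add: image_image)
  finally show ?thesis using feder_eq_image[OF assms] by simp
qed

lemma cls_ne: "finite V \<Longrightarrow> n \<in> feder_verts V k \<Longrightarrow> cls V k n \<noteq> {}"
  using cnt_surj by (fastforce simp: cls_def)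

lemma nb_sym:
  assumes "simple_graph V E"
  shows "sqrt (real (nb V E n p * nb V E p n)) = feder_adj V E n p"
proof (cases "SS V E n p = {}")
  case True
  then show ?thesis by (simp add: nb_def feder_adj_SS)
next
  case False
  then obtain u v where uv: "SS V E n p = {(u,v)}" using SS_cases[OF assms] by blast
  then have sw: "(v,u) \<in> SS V E p n" "p v = n v + 1" using SS_swap[OF assms, of u v n p] by auto
  then obtain a b where ab: "SS V E p n = {(a,b)}" using SS_cases[OF assms, of p n] by blast
  with sw have "SS V E p n = {(v,u)}" by auto
  then show ?thesis using uv sw by (simp add: nb_def feder_adj_SS)
qed

lemma part12:
  assumes G: "simple_graph V E"
  shows "equitable (cart_pow_verts V k) (cart_pow_adj E k) (orbit_partition V k)
       \<and> wiso (feder_verts V k) (feder_adj V E)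
              (orbit_partition V k) (quot_adj (cart_pow_adj E k))"
proof -
  have fin: "finite V" using G by (simp add: simple_graph_def)
  note op = op_eq[OF fin, of k]
  have nc: "nbr_count (cart_pow_adj E k) x (cls V k p) = nb V E n p"
    if "x \<in> cls V k n" for x n p
    using nbr_card[OF G, of x k p] that by (simp add: nbr_count_def cls_def)
  have un: "\<Union>(orbit_partition V k) = cart_pow_verts V k"
    unfolding op using feder_eq_image[OF fin] by (auto simp: cls_def)
  have eq: "equitable (cart_pow_verts V k) (cart_pow_adj E k) (orbit_partition V k)"
    unfolding equitable_def
  proof (intro conjI)
    show "\<Union>(orbit_partition V k) = cart_pow_verts V k" by (rule un)
    show "\<forall>C\<in>orbit_partition V k. C \<noteq> {}" unfolding op using cls_ne[OF fin] by blast
    show "\<forall>C\<in>orbit_partition V k. \<forall>D\<in>orbit_partition V k. C \<noteq> D \<longrightarrow> C \<inter> D = {}"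
      unfolding op by (auto simp: cls_def)
    show "\<forall>C\<in>orbit_partition V k. \<forall>D\<in>orbit_partition V k. \<forall>x\<in>C. \<forall>x'\<in>C.
        nbr_count (cart_pow_adj E k) x D = nbr_count (cart_pow_adj E k) x' D"
    proof (intro ballI)
      fix C D x x' assume C: "C \<in> orbit_partition V k" and D: "D \<in> orbit_partition V k"
        and x: "x \<in> C" and x': "x' \<in> C"
      obtain n where n: "C = cls V k n" using C unfolding op by blast
      obtain p where p: "D = cls V k p" using D unfolding op by blast
      show "nbr_count (cart_pow_adj E k) x D = nbr_count (cart_pow_adj E k) x' D"
        using nc[of x n p] nc[of x' n p] x x' n p by simp
    qed
  qed
  have inj: "inj_on (cls V k) (feder_verts V k)"
  proof (rule inj_onI)
    fix n p assume n: "n \<in> feder_verts V k" and "p \<in> feder_verts V k" and e: "cls V k n = cls V k p"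
    obtain y where "y \<in> cls V k n" using cls_ne[OF fin n] by blast
    then show "n = p" using e by (auto simp: cls_def)
  qed
  have "wiso (feder_verts V k) (feder_adj V E) (orbit_partition V k) (quot_adj (cart_pow_adj E k))"
    unfolding wiso_def
  proof (intro exI[of _ "cls V k"] conjI ballI)
    show "bij_betw (cls V k) (feder_verts V k) (orbit_partition V k)"
      using inj op by (simp add: bij_betw_def)
    fix n p assume n: "n \<in> feder_verts V k" and p: "p \<in> feder_verts V k"
    have s1: "(SOME x. x \<in> cls V k n) \<in> cls V k n" using cls_ne[OF fin n] by (simp add: some_in_eq)
    have s2: "(SOME x. x \<in> cls V k p) \<in> cls V k p" using cls_ne[OF fin p] by (simp add: some_in_eq)
    show "quot_adj (cart_pow_adj E k) (cls V k n) (cls V k p) = feder_adj V E n p"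
      unfolding quot_adj_def nc[OF s1] nc[OF s2] using nb_sym[OF G] by simp
  qed
  with eq show ?thesis by simp
qed



lemma quot_mpow:
  fixes W2 :: "'c set" and W1 :: "'b set" and \<pi> :: "'c \<Rightarrow> 'b" and s :: "'b \<Rightarrow> real"
  assumes fin: "finite W2" and W1: "W1 = \<pi> ` W2" and s: "\<And>p. p \<in> W1 \<Longrightarrow> s p \<noteq> 0"
    and H: "\<And>x p. x \<in> W2 \<Longrightarrow> p \<in> W1 \<Longrightarrow>
       (\<Sum>z\<in>{z\<in>W2. \<pi> z = p}. A2 x z) = A1 (\<pi> x) p * s p / s (\<pi> x)"
  shows "x \<in> W2 \<Longrightarrow> q \<in> W1 \<Longrightarrow>
    (\<Sum>y\<in>{y\<in>W2. \<pi> y = q}. mpow W2 A2 m x y) = mpow W1 A1 m (\<pi> x) q * s q / s (\<pi> x)"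
proof (induction m arbitrary: x)
  case 0
  have px: "\<pi> x \<in> W1" using 0 W1 by blast
  have "(\<Sum>y\<in>{y\<in>W2. \<pi> y = q}. mpow W2 A2 0 x y) = (if \<pi> x = q then 1 else 0)"
    using 0 fin by (simp add: sum.delta)
  then show ?case using s[OF px] s[OF 0(2)] by simp
next
  case (Suc m)
  have px: "\<pi> x \<in> W1" using Suc W1 by blast
  have finW1: "finite W1" using W1 fin by simp
  define g where "g p = mpow W1 A1 m p q * s q / s p" for p
  have "(\<Sum>y\<in>{y\<in>W2. \<pi> y = q}. mpow W2 A2 (Suc m) x y)
      = (\<Sum>y\<in>{y\<in>W2. \<pi> y = q}. \<Sum>z\<in>W2. A2 x z * mpow W2 A2 m z y)" by simp
  also have "\<dots> = (\<Sum>z\<in>W2. A2 x z * (\<Sum>y\<in>{y\<in>W2. \<pi> y = q}. mpow W2 A2 m z y))"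
    by (subst sum.swap) (simp add: sum_distrib_left)
  also have "\<dots> = (\<Sum>z\<in>W2. A2 x z * g (\<pi> z))"
    using Suc.IH Suc.prems(2) by (intro sum.cong) (auto simp: g_def)
  also have "\<dots> = (\<Sum>p\<in>W1. \<Sum>z\<in>{z\<in>W2. \<pi> z = p}. A2 x z * g (\<pi> z))"
    by (rule sum.group[symmetric]) (use fin finW1 W1 in auto)
  also have "\<dots> = (\<Sum>p\<in>W1. (\<Sum>z\<in>{z\<in>W2. \<pi> z = p}. A2 x z) * g p)"
    by (intro sum.cong refl) (auto simp: sum_distrib_right)
  also have "\<dots> = (\<Sum>p\<in>W1. A1 (\<pi> x) p * s p / s (\<pi> x) * g p)"
    using H Suc.prems(1) by simp
  also have "\<dots> = (\<Sum>p\<in>W1. A1 (\<pi> x) p * mpow W1 A1 m p q) * s q / s (\<pi> x)"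
    unfolding sum_distrib_right sum_divide_distrib
    using s by (intro sum.cong refl) (simp add: g_def)
  finally show ?case by simp
qed

lemma pascal_sum:
  fixes f g :: "nat \<Rightarrow> real"
  shows "(\<Sum>j\<le>Suc m. real (Suc m choose j) * f j * g (Suc m - j))
    = (\<Sum>j\<le>m. real (m choose j) * f (Suc j) * g (m - j))
    + (\<Sum>j\<le>m. real (m choose j) * f j * g (Suc (m - j)))"
proof -
  define h where "h j = f j * g (Suc m - j)" for j
  have "(\<Sum>j\<le>Suc m. real (Suc m choose j) * f j * g (Suc m - j))
      = (\<Sum>j\<le>Suc m. real (Suc m choose j) * h j)" by (simp add: h_def mult.assoc)
  also have "\<dots> = h 0 + (\<Sum>j\<le>m. real (Suc m choose Suc j) * h (Suc j))"
    by (subst sum.atMost_Suc_shift) simp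
  also have "\<dots> = h 0 + (\<Sum>j\<le>m. real (m choose j) * h (Suc j)) + (\<Sum>j\<le>m. real (m choose Suc j) * h (Suc j))"
    by (simp add: sum.distrib algebra_simps)
  finally have e1: "(\<Sum>j\<le>Suc m. real (Suc m choose j) * f j * g (Suc m - j))
      = h 0 + (\<Sum>j\<le>m. real (m choose j) * h (Suc j)) + (\<Sum>j\<le>m. real (m choose Suc j) * h (Suc j))" .
  have "h 0 + (\<Sum>j\<le>m. real (m choose Suc j) * h (Suc j)) = (\<Sum>j\<le>Suc m. real (m choose j) * h j)"
    by (subst sum.atMost_Suc_shift) simp
  also have "\<dots> = (\<Sum>j\<le>m. real (m choose j) * h j)" by simp
  finally have "(\<Sum>j\<le>Suc m. real (Suc m choose j) * f j * g (Suc m - j))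
      = (\<Sum>j\<le>m. real (m choose j) * h (Suc j)) + (\<Sum>j\<le>m. real (m choose j) * h j)" using e1 by simp
  also have "(\<Sum>j\<le>m. real (m choose j) * h (Suc j)) = (\<Sum>j\<le>m. real (m choose j) * f (Suc j) * g (m - j))"
    by (simp add: h_def mult.assoc)
  also have "(\<Sum>j\<le>m. real (m choose j) * h j) = (\<Sum>j\<le>m. real (m choose j) * f j * g (Suc (m - j)))"
    by (intro sum.cong refl) (simp add: h_def mult.assoc Suc_diff_le)
  finally show ?thesis .
qed

definition mbound :: "'b set \<Rightarrow> ('b \<Rightarrow> 'b \<Rightarrow> real) \<Rightarrow> real" where
  "mbound W A = (\<Sum>w\<in>W. \<Sum>x\<in>W. \<bar>A w x\<bar>)"

lemma mbound_nonneg: "0 \<le> mbound W A"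
  by (simp add: mbound_def sum_nonneg)

lemma mpow_bound:
  assumes "finite W" "v \<in> W"
  shows "\<bar>mpow W A n v u\<bar> \<le> mbound W A ^ n"
  using assms(2)
proof (induction n arbitrary: v)
  case 0 then show ?case by simp
next
  case (Suc n)
  have "\<bar>mpow W A (Suc n) v u\<bar> \<le> (\<Sum>x\<in>W. \<bar>A v x\<bar> * \<bar>mpow W A n x u\<bar>)"
    by (simp add: sum_abs[THEN order_trans] abs_mult)
  also have "\<dots> \<le> (\<Sum>x\<in>W. \<bar>A v x\<bar> * mbound W A ^ n)"
    using Suc.IH by (intro sum_mono mult_left_mono) auto
  also have "\<dots> = (\<Sum>x\<in>W. \<bar>A v x\<bar>) * mbound W A ^ n" by (simp add: sum_distrib_right)
  also have "(\<Sum>x\<in>W. \<bar>A v x\<bar>) \<le> mbound W A"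
    unfolding mbound_def using assms(1) Suc.prems
    by (intro member_le_sum[where f="\<lambda>w. \<Sum>x\<in>W. \<bar>A w x\<bar>"]) (auto intro: sum_nonneg)
  then have "(\<Sum>x\<in>W. \<bar>A v x\<bar>) * mbound W A ^ n \<le> mbound W A * mbound W A ^ n"
    by (intro mult_right_mono) (simp_all add: mbound_nonneg)
  finally show ?case by simp
qed

definition tterm :: "'b set \<Rightarrow> ('b \<Rightarrow> 'b \<Rightarrow> real) \<Rightarrow> real \<Rightarrow> 'b \<Rightarrow> 'b \<Rightarrow> nat \<Rightarrow> complex" where
  "tterm W A t v u n = (- \<i> * complex_of_real t) ^ n / of_nat (fact n) * complex_of_real (mpow W A n v u)"

lemma transition_tterm: "transition W A t v u = (\<Sum>n. tterm W A t v u n)"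
  by (simp add: transition_def tterm_def)

lemma tterm_summable:
  assumes "finite W" "v \<in> W"
  shows "summable (\<lambda>n. norm (tterm W A t v u n))"
proof (rule summable_comparison_test)
  show "summable (\<lambda>n. inverse (fact n) * (\<bar>t\<bar> * mbound W A) ^ n)" by (rule summable_exp)
  show "\<exists>N. \<forall>n\<ge>N. norm (norm (tterm W A t v u n)) \<le> inverse (fact n) * (\<bar>t\<bar> * mbound W A) ^ n"
  proof (intro exI allI impI)
    fix n
    have "norm (tterm W A t v u n) = \<bar>t\<bar> ^ n / fact n * \<bar>mpow W A n v u\<bar>"
      by (simp add: tterm_def norm_mult norm_divide norm_power)
    also have "\<dots> \<le> \<bar>t\<bar> ^ n / fact n * mbound W A ^ n"
      using mpow_bound[OF assms] by (intro mult_left_mono) auto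
    finally show "norm (norm (tterm W A t v u n)) \<le> inverse (fact n) * (\<bar>t\<bar> * mbound W A) ^ n"
      by (simp add: power_mult_distrib field_simps)
  qed
qed



lemma W_suc: "cart_pow_verts V (Suc k) = (\<lambda>(c,z). c # z) ` (V \<times> cart_pow_verts V k)"
proof
  show "cart_pow_verts V (Suc k) \<subseteq> (\<lambda>(c,z). c # z) ` (V \<times> cart_pow_verts V k)"
  proof
    fix w assume w: "w \<in> cart_pow_verts V (Suc k)"
    then obtain c z where "w = c # z" by (cases w) (auto simp: cart_pow_verts_def)
    then show "w \<in> (\<lambda>(c,z). c # z) ` (V \<times> cart_pow_verts V k)"
      using w by (auto simp: cart_pow_verts_def)
  qed
qed (auto simp: cart_pow_verts_def)

lemma sum_W_suc:
  assumes "finite V"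
  shows "(\<Sum>w\<in>cart_pow_verts V (Suc k). f w) = (\<Sum>c\<in>V. \<Sum>z\<in>cart_pow_verts V k. f (c # z))"
proof -
  have inj: "inj_on (\<lambda>(c,z). c # z) (V \<times> cart_pow_verts V k)" by (auto simp: inj_on_def)
  have fin: "finite (cart_pow_verts V k)" using assms by (simp add: cart_pow_verts_def finite_lists_length_eq)
  have "(\<Sum>w\<in>cart_pow_verts V (Suc k). f w) = (\<Sum>(c,z)\<in>V \<times> cart_pow_verts V k. f (c # z))"
    unfolding W_suc by (subst sum.reindex[OF inj]) (simp add: case_prod_unfold)
  also have "\<dots> = (\<Sum>c\<in>V. \<Sum>z\<in>cart_pow_verts V k. f (c # z))"
    by (rule sum.cartesian_product[symmetric])
  finally show ?thesis .
qed

lemma adj_suc_iff: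
  assumes irr: "\<And>a. \<not> E a a" and l: "length x = k" "length z = k"
  shows "cart_pow_adj E (Suc k) (a # x) (c # z) \<longleftrightarrow> (E a c \<and> x = z) \<or> (a = c \<and> cart_pow_adj E k x z)"
proof
  assume "cart_pow_adj E (Suc k) (a # x) (c # z)"
  then obtain i where i: "i < Suc k" "E ((a#x)!i) ((c#z)!i)"
    "\<forall>j<Suc k. j \<noteq> i \<longrightarrow> (a#x) ! j = (c#z) ! j" by (auto simp: cart_pow_adj_def)
  show "(E a c \<and> x = z) \<or> (a = c \<and> cart_pow_adj E k x z)"
  proof (cases i)
    case 0
    have "x = z"
    proof (rule nth_equalityI)
      show "length x = length z" using l by simp
      fix j assume "j < length x"
      then show "x ! j = z ! j" using i(3)[rule_format, of "Suc j"] l 0 by simp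
    qed
    then show ?thesis using i 0 by simp
  next
    case (Suc i')
    have "a = c" using i(3)[rule_format, of 0] Suc by simp
    moreover have "cart_pow_adj E k x z"
      unfolding cart_pow_adj_def
    proof (intro conjI exI[of _ i'])
      show "length x = k" "length z = k" "i' < k" using l i Suc by auto
      show "E (x ! i') (z ! i')" using i Suc by simp
      show "\<forall>j<k. j \<noteq> i' \<longrightarrow> x ! j = z ! j"
        using i(3) Suc by (metis Suc_less_eq nat.inject nth_Cons_Suc)
    qed
    ultimately show ?thesis by simp
  qed
next
  assume h: "(E a c \<and> x = z) \<or> (a = c \<and> cart_pow_adj E k x z)"
  then show "cart_pow_adj E (Suc k) (a # x) (c # z)"
  proof
    assume "E a c \<and> x = z"
    then show ?thesis using l unfolding cart_pow_adj_def
      by (intro conjI exI[of _ 0]) (auto simp: nth_Cons split: nat.splits)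
  next
    assume h2: "a = c \<and> cart_pow_adj E k x z"
    then obtain i where i: "i < k" "E (x!i) (z!i)" "\<forall>j<k. j \<noteq> i \<longrightarrow> x ! j = z ! j"
      by (auto simp: cart_pow_adj_def)
    show ?thesis using l h2 i unfolding cart_pow_adj_def
      by (intro conjI exI[of _ "Suc i"]) (auto simp: nth_Cons split: nat.splits)
  qed
qed

lemma adj_suc:
  assumes irr: "\<And>a. \<not> E a a" and l: "length x = k" "length z = k"
  shows "graph_adj (cart_pow_adj E (Suc k)) (a # x) (c # z)
     = graph_adj E a c * (if x = z then 1 else 0) + (if a = c then 1 else 0) * graph_adj (cart_pow_adj E k) x z"
proof -
  have "cart_pow_adj E (Suc k) (a # x) (c # z) \<longleftrightarrow> (E a c \<and> x = z) \<or> (a = c \<and> cart_pow_adj E k x z)"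
    by (rule adj_suc_iff[OF irr l])
  then show ?thesis using irr[of a] by (auto simp: graph_adj_def)
qed


lemma mpow_binom:
  assumes fin: "finite V" and irr: "\<And>a. \<not> E a a" and a: "a \<in> V" and x: "x \<in> cart_pow_verts V k"
  shows "mpow (cart_pow_verts V (Suc k)) (graph_adj (cart_pow_adj E (Suc k))) m (a#x) (b#y)
    = (\<Sum>j\<le>m. real (m choose j) * mpow V (graph_adj E) j a b
         * mpow (cart_pow_verts V k) (graph_adj (cart_pow_adj E k)) (m-j) x y)"
  using a x
proof (induction m arbitrary: a x)
  case 0
  then show ?case by simp
next
  case (Suc m)
  define W where "W = cart_pow_verts V k"
  define W' where "W' = cart_pow_verts V (Suc k)"
  define A where "A = graph_adj E"
  define B where "B = graph_adj (cart_pow_adj E k)"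
  define Bs where "Bs = graph_adj (cart_pow_adj E (Suc k))"
  define M where "M w = mpow W' Bs m w (b#y)" for w
  define f where "f j = mpow V A j a b" for j
  define g where "g i = mpow W B i x y" for i
  have finW: "finite W" using fin by (simp add: W_def cart_pow_verts_def finite_lists_length_eq)
  have lx: "length x = k" using Suc.prems by (simp add: cart_pow_verts_def)
  have xW: "x \<in> W" using Suc.prems by (simp add: W_def)
  have IH: "M (c#z) = (\<Sum>j\<le>m. real (m choose j) * mpow V A j c b * mpow W B (m-j) z y)"
    if "c \<in> V" "z \<in> W" for c z
    using Suc.IH[OF that(1)] that(2) by (simp add: M_def W_def W'_def A_def B_def Bs_def)
  have "mpow W' Bs (Suc m) (a#x) (b#y) = (\<Sum>w\<in>W'. Bs (a#x) w * M w)" by (simp add: M_def)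
  also have "\<dots> = (\<Sum>c\<in>V. \<Sum>z\<in>W. Bs (a#x) (c#z) * M (c#z))"
    unfolding W'_def W_def by (rule sum_W_suc[OF fin])
  also have "\<dots> = (\<Sum>c\<in>V. \<Sum>z\<in>W. A a c * (if x = z then M (c#z) else 0) + (if a = c then B x z * M (c#z) else 0))"
    by (intro sum.cong refl) (auto simp: Bs_def A_def B_def W_def adj_suc[OF irr] lx cart_pow_verts_def algebra_simps)
  also have "\<dots> = (\<Sum>c\<in>V. A a c * M (c#x)) + (\<Sum>z\<in>W. B x z * M (a#z))"
  proof -
    have h1: "(\<Sum>c\<in>V. \<Sum>z\<in>W. A a c * (if x = z then M (c#z) else 0)) = (\<Sum>c\<in>V. A a c * M (c#x))"
    proof (intro sum.cong refl)
      fix c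
      have "(\<Sum>z\<in>W. A a c * (if x = z then M (c#z) else 0)) = A a c * (\<Sum>z\<in>W. (if x = z then M (c#z) else 0))"
        by (simp add: sum_distrib_left)
      also have "\<dots> = A a c * M (c#x)" using xW finW by (simp add: sum.delta)
      finally show "(\<Sum>z\<in>W. A a c * (if x = z then M (c#z) else 0)) = A a c * M (c#x)" .
    qed
    have h2: "(\<Sum>c\<in>V. \<Sum>z\<in>W. (if a = c then B x z * M (c#z) else 0)) = (\<Sum>z\<in>W. B x z * M (a#z))"
      by (subst sum.swap) (use Suc.prems(1) fin in \<open>simp add: sum.delta\<close>)
    show ?thesis using h1 h2 by (simp add: sum.distrib)
  qed
  also have "(\<Sum>c\<in>V. A a c * M (c#x)) = (\<Sum>j\<le>m. real (m choose j) * f (Suc j) * g (m - j))"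
  proof -
    have "(\<Sum>c\<in>V. A a c * M (c#x)) = (\<Sum>c\<in>V. \<Sum>j\<le>m. real (m choose j) * (A a c * mpow V A j c b) * g (m-j))"
      using IH xW by (intro sum.cong refl) (simp add: sum_distrib_left g_def mult_ac)
    also have "\<dots> = (\<Sum>j\<le>m. real (m choose j) * (\<Sum>c\<in>V. A a c * mpow V A j c b) * g (m-j))"
      by (subst sum.swap) (simp add: sum_distrib_left sum_distrib_right)
    finally show ?thesis by (simp add: f_def)
  qed
  also have "(\<Sum>z\<in>W. B x z * M (a#z)) = (\<Sum>j\<le>m. real (m choose j) * f j * g (Suc (m - j)))"
  proof -
    have "(\<Sum>z\<in>W. B x z * M (a#z)) = (\<Sum>z\<in>W. \<Sum>j\<le>m. real (m choose j) * f j * (B x z * mpow W B (m-j) z y))"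
      using IH Suc.prems(1) by (intro sum.cong refl) (simp add: sum_distrib_left f_def mult_ac)
    also have "\<dots> = (\<Sum>j\<le>m. real (m choose j) * f j * (\<Sum>z\<in>W. B x z * mpow W B (m-j) z y))"
      by (subst sum.swap) (simp add: sum_distrib_left)
    finally show ?thesis by (simp add: g_def)
  qed
  also have "(\<Sum>j\<le>m. real (m choose j) * f (Suc j) * g (m - j)) + (\<Sum>j\<le>m. real (m choose j) * f j * g (Suc (m - j)))
     = (\<Sum>j\<le>Suc m. real (Suc m choose j) * f j * g (Suc m - j))"
    by (rule pascal_sum[symmetric])
  finally show ?case by (simp add: W_def W'_def A_def B_def Bs_def f_def g_def)
qed



lemma coef_eq:
  assumes "j \<le> n"
  shows "(c::complex) ^ n / of_nat (fact n) * of_real (real (n choose j))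
       = c ^ j / of_nat (fact j) * (c ^ (n - j) / of_nat (fact (n - j)))"
proof -
  have "of_real (real (n choose j)) = (of_nat (n choose j) :: complex)" by simp
  also have "\<dots> = fact n / (fact j * fact (n - j))" by (rule binomial_fact[OF assms])
  finally have b: "of_real (real (n choose j)) = (fact n / (fact j * fact (n - j)) :: complex)" .
  have p: "c ^ n = c ^ j * c ^ (n - j)" using assms by (simp flip: power_add)
  show ?thesis unfolding b p of_nat_fact by (simp add: field_simps)
qed

lemma regroup4:
  fixes C b X Y P Q :: complex
  assumes h: "C * b = X * Y"
  shows "C * (b * (P * Q)) = (X * P) * (Y * Q)"
proof -
  have "C * (b * (P * Q)) = (C * b) * (P * Q)" by (simp only: mult.assoc)
  also have "\<dots> = (X * Y) * (P * Q)" using h by simp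
  also have "\<dots> = (X * P) * (Y * Q)" by (simp only: mult_ac)
  finally show ?thesis .
qed

lemma trans_suc:
  assumes fin: "finite V" and irr: "\<And>a. \<not> E a a" and a: "a \<in> V" and x: "x \<in> cart_pow_verts V k"
  shows "transition (cart_pow_verts V (Suc k)) (graph_adj (cart_pow_adj E (Suc k))) t (a#x) (b#y)
    = transition V (graph_adj E) t a b * transition (cart_pow_verts V k) (graph_adj (cart_pow_adj E k)) t x y"
proof -
  define W where "W = cart_pow_verts V k"
  define A where "A = graph_adj E"
  define B where "B = graph_adj (cart_pow_adj E k)"
  have finW: "finite W" using fin by (simp add: W_def cart_pow_verts_def finite_lists_length_eq)
  have xW: "x \<in> W" using x by (simp add: W_def)
  have "transition V A t a b * transition W B t x y
      = (\<Sum>n. \<Sum>i\<le>n. tterm V A t a b i * tterm W B t x y (n - i))"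
    unfolding transition_tterm
    by (rule Cauchy_product[OF tterm_summable[OF fin a] tterm_summable[OF finW xW]])
  also have "\<dots> = (\<Sum>n. tterm (cart_pow_verts V (Suc k)) (graph_adj (cart_pow_adj E (Suc k))) t (a#x) (b#y) n)"
  proof (intro arg_cong[where f=suminf] ext)
    fix n
    have "tterm (cart_pow_verts V (Suc k)) (graph_adj (cart_pow_adj E (Suc k))) t (a#x) (b#y) n
       = (- \<i> * complex_of_real t) ^ n / of_nat (fact n) *
         (\<Sum>j\<le>n. of_real (real (n choose j)) * (of_real (mpow V A j a b) * of_real (mpow W B (n-j) x y)))"
      unfolding tterm_def mpow_binom[OF fin irr a x] by (simp add: A_def B_def W_def mult.assoc)
    also have "\<dots> = (\<Sum>j\<le>n. tterm V A t a b j * tterm W B t x y (n - j))"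
      unfolding sum_distrib_left
    proof (intro sum.cong refl)
      fix j assume "j \<in> {..n}"
      then have "j \<le> n" by simp
      from coef_eq[OF this, of "- \<i> * complex_of_real t"]
      show "(- \<i> * complex_of_real t) ^ n / of_nat (fact n) *
          (of_real (real (n choose j)) * (of_real (mpow V A j a b) * of_real (mpow W B (n-j) x y)))
          = tterm V A t a b j * tterm W B t x y (n - j)"
        unfolding tterm_def by (rule regroup4)
    qed
    finally show "(\<Sum>i\<le>n. tterm V A t a b i * tterm W B t x y (n - i))
      = tterm (cart_pow_verts V (Suc k)) (graph_adj (cart_pow_adj E (Suc k))) t (a#x) (b#y) n" by simp
  qed
  finally show ?thesis by (simp add: transition_tterm A_def B_def W_def)
qed

lemma trans_rep:
  assumes fin: "finite V" and irr: "\<And>a. \<not> E a a" and v: "v \<in> V"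
  shows "transition (cart_pow_verts V k) (graph_adj (cart_pow_adj E k)) t (replicate k v) (replicate k u)
    = transition V (graph_adj E) t v u ^ k"
proof (induction k)
  case 0
  have "mpow (cart_pow_verts V 0) (graph_adj (cart_pow_adj E 0)) n [] [] = (if n = 0 then 1 else 0)" for n
    by (cases n) (simp_all add: graph_adj_def cart_pow_adj_def)
  then have "(\<lambda>n. tterm (cart_pow_verts V 0) (graph_adj (cart_pow_adj E 0)) t [] [] n)
      = (\<lambda>n. if n = 0 then 1 else 0)" by (auto simp: tterm_def fun_eq_iff)
  then show ?case using sums_single[of 0 "\<lambda>_. 1::complex"]
    by (simp add: transition_tterm sums_iff)
next
  case (Suc k)
  have "replicate k v \<in> cart_pow_verts V k" using v by (auto simp: cart_pow_verts_def)
  then have "transition (cart_pow_verts V (Suc k)) (graph_adj (cart_pow_adj E (Suc k))) t (v # replicate k v) (u # replicate k u)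
    = transition V (graph_adj E) t v u * transition (cart_pow_verts V k) (graph_adj (cart_pow_adj E k)) t (replicate k v) (replicate k u)"
    by (rule trans_suc[OF fin irr v])
  then show ?case using Suc by simp
qed



definition ev :: "nat \<Rightarrow> 'a \<Rightarrow> 'a \<Rightarrow> nat" where "ev k u = (\<lambda>a. if a = u then k else 0)"

definition PF :: "'a set \<Rightarrow> ('a \<Rightarrow> nat) \<Rightarrow> nat" where "PF V n = (\<Prod>a\<in>V. fact (n a))"

definition sc :: "'a set \<Rightarrow> ('a \<Rightarrow> nat) \<Rightarrow> real" where "sc V n = 1 / sqrt (real (PF V n))"

lemma PF_pos: "0 < PF V n"
  by (simp add: PF_def prod_pos)

lemma sc_nz: "sc V n \<noteq> 0"
  using PF_pos[of V n] by (simp add: sc_def)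

lemma PF_ev: "finite V \<Longrightarrow> u \<in> V \<Longrightarrow> PF V (ev k u) = fact k"
proof -
  assume "finite V" "u \<in> V"
  have "PF V (ev k u) = (\<Prod>a\<in>V. if a = u then fact k else 1)"
    unfolding PF_def ev_def by (intro prod.cong refl) simp
  also have "\<dots> = fact k" using \<open>finite V\<close> \<open>u \<in> V\<close> by (simp add: prod.delta')
  finally show ?thesis .
qed

lemma ev_feder: "u \<in> V \<Longrightarrow> finite V \<Longrightarrow> ev k u \<in> feder_verts V k"
  by (auto simp: feder_verts_def ev_def sum.delta')

lemma cnt_rep: "cnt (replicate k u) = ev k u"
  by (auto simp: cnt_def ev_def fun_eq_iff)

lemma cls_ev:
  assumes "u \<in> V"
  shows "cls V k (ev k u) = {replicate k u}"
proof
  show "cls V k (ev k u) \<subseteq> {replicate k u}"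
  proof
    fix y assume y: "y \<in> cls V k (ev k u)"
    then have ly: "length y = k" and c: "cnt y = ev k u" by (auto simp: cls_def cart_pow_verts_def)
    have "\<forall>a\<in>set y. a = u"
    proof
      fix a assume "a \<in> set y"
      then have "count (mset y) a > 0" by simp
      moreover have "count (mset y) a = ev k u a" using fun_cong[OF c, of a] by (simp add: cnt_def)
      ultimately have "ev k u a > 0" by simp
      then show "a = u" by (simp add: ev_def split: if_splits)
    qed
    then have "y = replicate (length y) u" by (simp add: replicate_length_same)
    then show "y \<in> {replicate k u}" using ly by simp
  qed
  show "{replicate k u} \<subseteq> cls V k (ev k u)"
    using assms by (auto simp: cls_def cart_pow_verts_def cnt_rep)
qed

lemma PF_step:
  assumes "u \<in> V" "v \<in> V" "u \<noteq> v" "finite V" "1 \<le> n u"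
  shows "PF V n * (n v + 1) = PF V (n(u := n u - 1, v := n v + 1)) * n u"
proof -
  define p where "p = n(u := n u - 1, v := n v + 1)"
  define R where "R = (\<Prod>a\<in>V - {u} - {v}. fact (n a) :: nat)"
  have R': "R = (\<Prod>a\<in>V - {u} - {v}. fact (p a))" unfolding R_def p_def by (intro prod.cong) auto
  have vin: "v \<in> V - {u}" using assms by simp
  have "PF V n = fact (n u) * (fact (n v) * R)"
    unfolding PF_def R_def using assms vin
    by (simp add: prod.remove[of V u] prod.remove[of "V - {u}" v])
  moreover have "PF V p = fact (p u) * (fact (p v) * R)"
    unfolding PF_def R' using assms vin
    by (simp add: prod.remove[of V u] prod.remove[of "V - {u}" v])
  moreover have "p u = n u - 1" "p v = n v + 1" using assms by (auto simp: p_def)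
  moreover have "fact (n u) = n u * fact (n u - 1)" using assms(5) by (simp add: fact_reduce)
  ultimately show ?thesis unfolding p_def[symmetric] by (simp add: algebra_simps)
qed


lemma sum_adj_card:
  assumes "finite S"
  shows "(\<Sum>z\<in>S. graph_adj R x z) = real (card {z\<in>S. R x z})"
proof -
  have "real (card {z\<in>S. R x z}) = (\<Sum>z\<in>{z\<in>S. R x z}. 1)" by simp
  also have "\<dots> = (\<Sum>z\<in>S. if R x z then 1 else 0)" by (rule sum.inter_filter[OF assms])
  finally show ?thesis by (simp add: graph_adj_def)
qed

lemma nb_feder:
  assumes G: "simple_graph V E"
  shows "real (nb V E n p) = feder_adj V E n p * sc V p / sc V n"
proof (cases "SS V E n p = {}")
  case True
  then show ?thesis by (simp add: nb_def feder_adj_SS)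
next
  case False
  then obtain u v where uv: "SS V E n p = {(u,v)}" using SS_cases[OF G] by blast
  then have m: "u \<in> V" "v \<in> V" "E u v" "1 \<le> n u" "p = n(u := n u - 1, v := n v + 1)"
    by (auto simp: SS_def)
  have fin: "finite V" and ne: "u \<noteq> v" using G m(3) by (auto simp: simple_graph_def)
  have e0: "PF V n * (n v + 1) = PF V p * n u" using PF_step[where n=n, OF m(1,2) ne fin m(4)] m(5) by simp
  define a where "a = real (n u)"
  define b where "b = real (n v) + 1"
  define P where "P = real (PF V n)"
  define Q where "Q = real (PF V p)"
  have e: "P * b = Q * a" unfolding P_def Q_def a_def b_def using arg_cong[OF e0, of real] by (simp add: algebra_simps)
  have Q: "Q > 0" unfolding Q_def using PF_pos by simp
  have a0: "a \<ge> 0" by (simp add: a_def)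
  have "sqrt (a * b) * sqrt P = sqrt (a * (P * b))" by (simp add: real_sqrt_mult[symmetric] mult_ac)
  also have "\<dots> = sqrt (a * a * Q)" using e by (simp add: mult_ac)
  also have "\<dots> = a * sqrt Q" using a0 by (simp add: real_sqrt_mult)
  finally have key: "sqrt (a * b) * sqrt P = a * sqrt Q" .
  have "feder_adj V E n p * sc V p / sc V n = sqrt (a * b) * sqrt P / sqrt Q"
    using uv PF_pos[of V n] by (simp add: feder_adj_SS sc_def a_def b_def P_def Q_def algebra_simps)
  also have "\<dots> = a" using key Q by simp
  finally show ?thesis using uv by (simp add: nb_def a_def)
qed

lemma mpow_F_eq:
  assumes G: "simple_graph V E" and u: "u \<in> V" and v: "v \<in> V"
  shows "mpow (feder_verts V k) (feder_adj V E) m (ev k v) (ev k u)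
     = mpow (cart_pow_verts V k) (graph_adj (cart_pow_adj E k)) m (replicate k v) (replicate k u)"
proof -
  have fin: "finite V" using G by (simp add: simple_graph_def)
  have finW: "finite (cart_pow_verts V k)" using fin by (simp add: cart_pow_verts_def finite_lists_length_eq)
  have H: "(\<Sum>z\<in>{z\<in>cart_pow_verts V k. cnt z = p}. graph_adj (cart_pow_adj E k) x z)
      = feder_adj V E (cnt x) p * sc V p / sc V (cnt x)"
    if "x \<in> cart_pow_verts V k" "p \<in> feder_verts V k" for x p
  proof -
    have "(\<Sum>z\<in>{z\<in>cart_pow_verts V k. cnt z = p}. graph_adj (cart_pow_adj E k) x z)
        = real (card {z \<in> cls V k p. cart_pow_adj E k x z})"
      using sum_adj_card[of "cls V k p"] finW by (simp add: cls_def)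
    also have "\<dots> = real (nb V E (cnt x) p)" using nbr_card[OF G that(1)] by simp
    finally show ?thesis using nb_feder[OF G] by simp
  qed
  have rv: "replicate k v \<in> cart_pow_verts V k" using v by (auto simp: cart_pow_verts_def)
  have q: "ev k u \<in> feder_verts V k" using ev_feder[OF u fin] .
  have "(\<Sum>y\<in>{y\<in>cart_pow_verts V k. cnt y = ev k u}.
          mpow (cart_pow_verts V k) (graph_adj (cart_pow_adj E k)) m (replicate k v) y)
     = mpow (feder_verts V k) (feder_adj V E) m (cnt (replicate k v)) (ev k u) * sc V (ev k u) / sc V (cnt (replicate k v))"
    by (rule quot_mpow[OF finW feder_eq_image[OF fin] sc_nz H rv q])
  moreover have "{y\<in>cart_pow_verts V k. cnt y = ev k u} = {replicate k u}"
    using cls_ev[OF u] by (simp add: cls_def)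
  moreover have "sc V (ev k u) = sc V (ev k v)" by (simp add: sc_def PF_ev[OF fin u] PF_ev[OF fin v])
  ultimately show ?thesis using sc_nz[of V "ev k v"] by (simp add: cnt_rep)
qed

theorem theorem3:
  fixes V :: "'a set" and E :: "'a \<Rightarrow> 'a \<Rightarrow> bool" and k :: nat
  assumes "simple_graph V E" and "1 \<le> k"
  shows "equitable (cart_pow_verts V k) (cart_pow_adj E k) (orbit_partition V k)
       \<and> wiso (feder_verts V k) (feder_adj V E)
              (orbit_partition V k) (quot_adj (cart_pow_adj E k))
       \<and> (pst V (graph_adj E) \<longrightarrow> pst (feder_verts V k) (feder_adj V E))"
proof -
  have G: "simple_graph V E" by fact
  have fin: "finite V" and irr: "\<And>a. \<not> E a a" using G by (auto simp: simple_graph_def)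
  have "pst (feder_verts V k) (feder_adj V E)" if P: "pst V (graph_adj E)"
  proof -
    obtain u v t where uv: "u \<in> V" "v \<in> V" "u \<noteq> v" and t: "cmod (transition V (graph_adj E) t v u) = 1"
      using P unfolding pst_def by blast
    have tr: "transition (feder_verts V k) (feder_adj V E) t (ev k v) (ev k u)
        = transition (cart_pow_verts V k) (graph_adj (cart_pow_adj E k)) t (replicate k v) (replicate k u)"
      unfolding transition_def using mpow_F_eq[OF G uv(1,2)] by simp
    also have "\<dots> = transition V (graph_adj E) t v u ^ k" by (rule trans_rep[OF fin irr uv(2)])
    finally have "cmod (transition (feder_verts V k) (feder_adj V E) t (ev k v) (ev k u)) = 1"
      using t by (simp add: norm_power)
    moreover have "ev k u \<noteq> ev k v"
    proof
      assume "ev k u = ev k v"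
      then have "ev k u u = ev k v u" by simp
      then show False using uv(3) assms(2) by (simp add: ev_def)
    qed
    ultimately show ?thesis unfolding pst_def
      using ev_feder[OF uv(1) fin] ev_feder[OF uv(2) fin] by blast
  qed
  then show ?thesis using part12[OF G] by blast
qed

end
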